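(* Let $d\ge1$, let $\{e^j\}_{j=1}^d$ be the standard basis of $\mathbb{R}^d$, let $\|\cdot\|_2$ be the Euclidean norm, $B_2=\{x\in\mathbb{R}^d:\|x\|_2\le1\}$, and $B^o_2(x)=\{y:\|y-x\|_2<1\}$. Define $x^j:=\frac{1}{2d}e^j$ for $j=1,\dots,d$ and $x^{d+1}:=-\frac{1}{2d}\sum_{j=1}^d e^j$. Then $$B_2\subset\bigcup_{j=1}^{d+1}B^o_2(x^j).$$ *)

theory Defs
  imports "HOL-Analysis.Analysis"
begin

end

theory Submission
  imports Defs
begin

lemma sqnorm: "(norm (v::real^'n))^2 = (\<Sum>i\<in>UNIV. (v$i)^2)"
  by (simp add: norm_vec_def L2_set_def power2_eq_square sum_nonneg)

theorem proposition3p1: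
  fixes d :: nat
  assumes "d = CARD('n::finite)"
  shows "cball (0::real^'n) 1 \<subseteq>
           (\<Union>j\<in>(UNIV::'n set). ball ((1 / (2 * real d)) *\<^sub>R axis j 1) 1)
           \<union> ball (- (1 / (2 * real d)) *\<^sub>R (\<Sum>j\<in>UNIV. axis j 1)) 1"
proof
  fix x :: "real^'n"
  assume xin: "x \<in> cball 0 1"
  define c where "c = 1 / (2 * real d)"
  define s where "s = (\<Sum>i\<in>UNIV. (x$i)^2)"
  have dpos: "real d \<ge> 1" using assms by simp
  have cpos: "c > 0" and cle: "c \<le> 1/2" using dpos unfolding c_def by (auto simp: field_simps)
  have dc: "real d * c = 1/2" using dpos unfolding c_def by simp
  have "norm x \<le> 1" using xin by simp
  hence "(norm x)^2 \<le> 1" by (simp add: power_le_one)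
  hence s1: "s \<le> 1" unfolding s_def sqnorm .
  have xs: "(x$i)^2 \<le> s" for i unfolding s_def
    by (rule member_le_sum) auto
  show "x \<in> (\<Union>j\<in>(UNIV::'n set). ball ((1 / (2 * real d)) *\<^sub>R axis j 1) 1)
           \<union> ball (- (1 / (2 * real d)) *\<^sub>R (\<Sum>j\<in>UNIV. axis j 1)) 1"
  proof (cases "\<exists>j. x \<in> ball (c *\<^sub>R axis j 1) 1")
    case True thus ?thesis unfolding c_def by auto
  next
    case False
    define u where "u = (s + c^2 - 1) / (2*c)"
    have dj: "(norm (c *\<^sub>R axis j 1 - x))^2 = s - 2*c*x$j + c^2" for j
    proof -
      have "(norm (c *\<^sub>R axis j 1 - x))^2 = (\<Sum>i\<in>UNIV. (x$i)^2 - 2*c*(if i = j then x$i else 0) + (if i = j then c^2 else 0))"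
        unfolding sqnorm by (intro sum.cong) (auto simp: axis_def power2_eq_square algebra_simps)
      also have "\<dots> = s - 2*c*x$j + c^2"
        by (simp add: sum.distrib sum_subtractf s_def sum_distrib_left[symmetric])
      finally show ?thesis .
    qed
    have xj: "x$j \<le> u" for j
    proof -
      have "\<not> dist (c *\<^sub>R axis j 1) x < 1" using False by auto
      hence "norm (c *\<^sub>R axis j 1 - x) \<ge> 1" by (simp add: dist_norm)
      hence "(norm (c *\<^sub>R axis j 1 - x))^2 \<ge> 1" by (simp add: one_le_power)
      hence "s - 2*c*x$j + c^2 \<ge> 1" using dj by simp
      thus ?thesis unfolding u_def using cpos by (simp add: field_simps)
    qed
    have ule: "u \<le> 1/4"
    proof -
      have "s + c^2 - 1 \<le> c^2" using s1 by simp
      hence "u \<le> c^2/(2*c)" unfolding u_def using cpos by (simp add: divide_right_mono)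
      also have "\<dots> = c/2" using cpos by (simp add: power2_eq_square)
      finally show ?thesis using cle by simp
    qed
    have uc2: "u \<le> c/2"
    proof -
      have "s + c^2 - 1 \<le> c^2" using s1 by simp
      hence "u \<le> c^2/(2*c)" unfolding u_def using cpos by (simp add: divide_right_mono)
      also have "\<dots> = c/2" using cpos by (simp add: power2_eq_square)
      finally show ?thesis .
    qed
    have each: "x$j + (x$j)^2 \<le> 5/4 * max 0 u" for j
    proof -
      have a: "(x$j)^2 \<le> 1" using xs[of j] s1 by simp
      hence "\<bar>x$j\<bar> \<le> 1" by (simp add: abs_square_le_1)
      hence x1: "x$j \<ge> -1" by simp
      show ?thesis
      proof (cases "x$j \<le> 0")
        case True
        have "x$j * (1 + x$j) \<le> 0" using True x1 by (intro mult_nonpos_nonneg) auto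
        thus ?thesis by (simp add: power2_eq_square algebra_simps max_def)
      next
        case False
        have "x$j * x$j \<le> x$j * (1/4)" using xj[of j] ule False by (intro mult_left_mono) auto
        hence "(x$j)^2 \<le> u/4" using xj[of j] by (simp add: power2_eq_square)
        moreover have "max 0 u = u" using xj[of j] False by simp
        ultimately show ?thesis using xj[of j] by linarith
      qed
    qed
    have "(\<Sum>j\<in>UNIV. x$j + (x$j)^2) \<le> (\<Sum>j\<in>(UNIV::'n set). 5/4 * max 0 u)"
      by (rule sum_mono) (rule each)
    hence sumx: "(\<Sum>j\<in>UNIV. x$j) \<le> - s + real d * (5/4 * max 0 u)"
      using assms by (simp add: sum.distrib s_def)
    have tgt: "(norm (x - (- c) *\<^sub>R (\<Sum>j\<in>UNIV. axis j (1::real))))^2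
             = s + 2*c*(\<Sum>j\<in>UNIV. x$j) + real d * c^2"
    proof -
      have "(norm (x - (- c) *\<^sub>R (\<Sum>j\<in>UNIV. axis j (1::real))))^2
            = (\<Sum>i\<in>UNIV. (x$i)^2 + 2*c*x$i + c^2)"
        unfolding sqnorm
        by (intro sum.cong) (auto simp: sum_component axis_def power2_eq_square algebra_simps)
      thus ?thesis using assms by (simp add: sum.distrib s_def sum_distrib_left)
    qed
    have key: "s + 2*c*(\<Sum>j\<in>UNIV. x$j) + real d * c^2 < 1"
    proof -
      have "2*c*(\<Sum>j\<in>UNIV. x$j) \<le> 2*c*(- s + real d * (5/4 * max 0 u))"
        using sumx cpos by simp
      also have "\<dots> = (- (s * (2*c))) + 5/4 * max 0 u"
        using dc by (simp add: algebra_simps)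
      finally have h: "2*c*(\<Sum>j\<in>UNIV. x$j) \<le> (- (s * (2*c))) + 5/4 * max 0 u" .
      have dc2: "real d * c^2 = c/2" using dc by (simp add: power2_eq_square)
      have m1: "s*(1-2*c) \<le> 1*(1-2*c)" using s1 cle by (intro mult_right_mono) auto
      have "max 0 u \<le> c/2" using uc2 cpos by simp
      hence "s - s*(2*c) + 5/4 * max 0 u + c/2 < 1" using m1 cpos by (simp add: algebra_simps)
      thus ?thesis using h dc2 by linarith
    qed
    have "norm (x - (- c) *\<^sub>R (\<Sum>j\<in>UNIV. axis j (1::real))) < 1"
      using tgt key by (metis abs_norm_cancel abs_square_less_1)
    hence "x \<in> ball (- c *\<^sub>R (\<Sum>j\<in>UNIV. axis j 1)) 1"
      by (simp add: dist_norm norm_minus_commute)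
    thus ?thesis unfolding c_def by auto
  qed
qed

end
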